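(* Let $\alpha \vDash n$ be a strong composition with $\ell(\alpha) = r$, and let $\overline{\alpha}$ have length $s$. Write $\{1 \leq j \leq r : \alpha_j > 1\} = \{j_1, \ldots, j_s\}$. Then \[ \deg(\alpha) = \deg(\overline{\alpha}) + \binom{r}{2} - s + j_1 + \cdots + j_s. \]
   Context: A strong composition $\alpha = (\alpha_1, \ldots, \alpha_r)$ of $n$ is a sequence of positive integers summing to $n$, with length $\ell(\alpha) = r$. $\operatorname{coinv}(\alpha) = \#\{1 \leq i < j \leq \ell(\alpha) : \alpha_i < \alpha_j\}$. Let $\mu(\alpha)$ be the weakly decreasing rearrangement of $\alpha$. Define $\deg(\alpha) = \operatorname{coinv}(\alpha) + \sum_{i=1}^{\ell(\alpha)} (i-1)(2\mu(\alpha)_i - 1)$. $\overline{\alpha}$ is the strong composition obtained by subtracting $1$ from every entry of $\alpha$ and deleting the resulting zeros (the empty composition has $\deg = 0$). *)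

theory Defs
  imports Main
begin

text \<open>Strong compositions are lists of positive naturals; entries indexed 1..length
  (list index i-1 holds alpha_i).\<close>

definition strong_comp :: "nat list \<Rightarrow> nat \<Rightarrow> bool" where
  "strong_comp \<alpha> n \<longleftrightarrow> (\<forall>x\<in>set \<alpha>. 0 < x) \<and> sum_list \<alpha> = n"

definition coinv :: "nat list \<Rightarrow> nat" where
  "coinv \<alpha> = card {(i, j). 1 \<le> i \<and> i < j \<and> j \<le> length \<alpha> \<and> \<alpha> ! (i - 1) < \<alpha> ! (j - 1)}"

definition mu :: "nat list \<Rightarrow> nat list" where
  "mu \<alpha> = rev (sort \<alpha>)"

definition deg :: "nat list \<Rightarrow> int" where
  "deg \<alpha> = int (coinv \<alpha>)
     + (\<Sum>i = 1..length \<alpha>. (int i - 1) * (2 * int (mu \<alpha> ! (i - 1)) - 1))"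

definition bar :: "nat list \<Rightarrow> nat list" where
  "bar \<alpha> = filter (\<lambda>x. x \<noteq> 0) (map (\<lambda>x. x - 1) \<alpha>)"

end

theory Submission
  imports Defs "HOL-Library.Multiset"
begin

definition pos :: "nat list \<Rightarrow> bool" where "pos xs \<longleftrightarrow> (\<forall>x\<in>set xs. 0 < x)"

lemma bar_Nil[simp]: "bar [] = []" by (simp add: bar_def)

lemma bar_Cons: "bar (x#xs) = (if x > 1 then (x-1) # bar xs else bar xs)"
  by (auto simp: bar_def)

lemma bar_snoc: "bar (xs@[x]) = (if x > 1 then bar xs @ [x-1] else bar xs)"
  by (auto simp: bar_def)

lemma len_split: "pos xs \<Longrightarrow> length xs = length (filter (\<lambda>y. y = 1) xs) + length (bar xs)"
  by (induction xs) (auto simp: pos_def bar_Cons)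

lemma mset_split: "pos xs \<Longrightarrow> mset xs = replicate_mset (length (filter (\<lambda>y. y = 1) xs)) 1 + mset (map Suc (bar xs))"
  by (induction xs) (auto simp: pos_def bar_Cons)

lemma sort_split: assumes "pos xs"
  shows "sort xs = replicate (length (filter (\<lambda>y. y = 1) xs)) 1 @ map Suc (sort (bar xs))"
proof (rule properties_for_sort)
  show "mset (replicate (length (filter (\<lambda>y. y = 1) xs)) 1 @ map Suc (sort (bar xs))) = mset xs"
    using mset_split[OF assms] by (simp add: mset_map)
  show "sorted (replicate (length (filter (\<lambda>y. y = 1) xs)) 1 @ map Suc (sort (bar xs)))"
    by (auto simp: sorted_append sorted_map)
qed

lemma mu_split: assumes "pos xs"
  shows "mu xs = map Suc (mu (bar xs)) @ replicate (length xs - length (bar xs)) 1"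
  using sort_split[OF assms] len_split[OF assms] by (simp add: mu_def rev_map)

definition T :: "nat list \<Rightarrow> int" where
  "T m = (\<Sum>i<length m. int i * (2 * int (m ! i) - 1))"

lemma T_eq: "(\<Sum>i = 1..length m. (int i - 1) * (2 * int (m ! (i - 1)) - 1)) = T m"
proof -
  have "(\<Sum>i = 1..length m. (int i - 1) * (2 * int (m ! (i - 1)) - 1))
      = (\<Sum>i \<in> Suc ` {..<length m}. (int i - 1) * (2 * int (m ! (i - 1)) - 1))"
  proof (rule sum.cong)
    show "{1..length m} = Suc ` {..<length m}"
      by (simp add: lessThan_atLeast0 image_Suc_atLeastLessThan atLeastLessThanSuc_atLeastAtMost)
  qed simp
  also have "\<dots> = T m" by (subst sum.reindex) (auto simp: T_def)
  finally show ?thesis .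
qed

lemma sum_choose: "(\<Sum>i<n. int i) = int (n choose 2)"
proof (induction n)
  case (Suc n)
  have "(Suc n choose 2) = (n choose 2) + n"
  proof -
    have "(Suc n choose Suc (Suc 0)) = (n choose Suc 0) + (n choose Suc (Suc 0))" by (rule binomial_Suc_Suc)
    then show ?thesis unfolding numeral_2_eq_2 by (simp only: choose_one One_nat_def[symmetric] add.commute)
  qed
  then show ?case using Suc by simp
qed simp

lemma T_snoc1: "T (xs @ [1]) = T xs + int (length xs)"
  unfolding T_def by (simp add: nth_append)

lemma T_rep: "T (xs @ replicate k 1) = T xs + int ((length xs + k) choose 2) - int (length xs choose 2)"
proof (induction k)
  case 0 then show ?case by simp
next
  case (Suc k)
  have "xs @ replicate (Suc k) 1 = (xs @ replicate k 1) @ [1]" by (simp add: replicate_append_same)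
  then have "T (xs @ replicate (Suc k) 1) = T (xs @ replicate k 1) + int (length xs + k)"
    using T_snoc1[of "xs @ replicate k 1"] by simp
  also have "\<dots> = T xs + int ((length xs + Suc k) choose 2) - int (length xs choose 2)"
    using Suc sum_choose[of "length xs + k"] sum_choose[of "length xs + Suc k"] by simp
  finally show ?case .
qed

lemma T_Suc: "T (map Suc m) = T m + 2 * int (length m choose 2)"
proof -
  have "T (map Suc m) = (\<Sum>i<length m. int i * (2 * int (m ! i) - 1) + 2 * int i)"
    unfolding T_def by (rule sum.cong) (auto simp: algebra_simps)
  also have "\<dots> = T m + 2 * (\<Sum>i<length m. int i)"
    by (simp add: sum.distrib T_def sum_distrib_left)
  finally show ?thesis by (simp add: sum_choose)
qed

lemma T_split: "T (map Suc m @ replicate k 1) = T m + int ((length m + k) choose 2) + int (length m choose 2)"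
  using T_rep[of "map Suc m" k] T_Suc[of m] by simp

lemma coinv_snoc: "coinv (xs @ [x]) = coinv xs + length (filter (\<lambda>y. y < x) xs)"
proof -
  let ?r = "length xs"
  let ?P = "\<lambda>l. {(i, j). 1 \<le> i \<and> i < j \<and> j \<le> length l \<and> l ! (i - 1) < l ! (j - 1)}"
  let ?Q = "(\<lambda>i. (i, Suc ?r)) ` {i. 1 \<le> i \<and> i \<le> ?r \<and> xs ! (i - 1) < x}"
  have eq: "?P (xs @ [x]) = ?P xs \<union> ?Q"
    by (auto simp: nth_append le_Suc_eq split: if_splits)
  have fin1: "finite (?P xs)"
    by (rule finite_subset[of _ "{0..?r} \<times> {0..?r}"]) auto
  have fin2: "finite ?Q" by simp
  have disj: "?P xs \<inter> ?Q = {}" by auto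
  have cQ: "card ?Q = card {i. 1 \<le> i \<and> i \<le> ?r \<and> xs ! (i - 1) < x}"
    by (rule card_image) (auto simp: inj_on_def)
  have "{i. 1 \<le> i \<and> i \<le> ?r \<and> xs ! (i - 1) < x} = Suc ` {i. i < ?r \<and> xs ! i < x}"
  proof (auto simp: image_iff)
    fix i assume "Suc 0 \<le> i" "i \<le> length xs" "xs ! (i - Suc 0) < x"
    then show "\<exists>k<length xs. xs ! k < x \<and> i = Suc k" by (intro exI[of _ "i - 1"]) auto
  qed
  then have "card {i. 1 \<le> i \<and> i \<le> ?r \<and> xs ! (i - 1) < x} = length (filter (\<lambda>y. y < x) xs)"
    by (simp add: card_image length_filter_conv_card)
  then show ?thesis
    unfolding coinv_def using eq fin1 fin2 disj cQ by (simp add: card_Un_disjoint)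
qed

lemma filter_count: "pos xs \<Longrightarrow> 1 < x \<Longrightarrow>
  length (filter (\<lambda>y. y < x) xs) = length (filter (\<lambda>y. y = 1) xs) + length (filter (\<lambda>y. y < x - 1) (bar xs))"
  by (induction xs) (auto simp: pos_def bar_Cons)

lemma filter_count1: "pos xs \<Longrightarrow> length (filter (\<lambda>y. y < 1) xs) = 0"
  by (auto simp: pos_def filter_empty_conv)

definition J :: "nat list \<Rightarrow> nat set" where
  "J xs = {j. 1 \<le> j \<and> j \<le> length xs \<and> xs ! (j - 1) > 1}"

lemma J_snoc: "J (xs @ [x]) = J xs \<union> (if x > 1 then {Suc (length xs)} else {})"
  by (auto simp: J_def nth_append le_Suc_eq split: if_splits)

lemma J_fin: "finite (J xs)"
  unfolding J_def by (rule finite_subset[of _ "{0..length xs}"]) auto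

lemma coinv_main: "pos xs \<Longrightarrow> int (coinv xs) + int (length (bar xs) choose 2) + int (length (bar xs))
   = int (coinv (bar xs)) + int (\<Sum>j \<in> J xs. j)"
proof (induction xs rule: rev_induct)
  case Nil
  then show ?case by (simp add: J_def coinv_def)
next
  case (snoc x xs)
  have px: "pos xs" and x0: "0 < x" using snoc.prems by (auto simp: pos_def)
  note IH = snoc.IH[OF px]
  show ?case
  proof (cases "x > 1")
    case True
    have nJ: "Suc (length xs) \<notin> J xs" by (auto simp: J_def)
    have sJ: "(\<Sum>j \<in> J (xs @ [x]). j) = (\<Sum>j \<in> J xs. j) + Suc (length xs)"
      using True nJ J_fin[of xs] by (simp add: J_snoc)
    have ch: "(Suc (length (bar xs)) choose 2) = (length (bar xs) choose 2) + length (bar xs)"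
      using sum_choose[of "Suc (length (bar xs))"] sum_choose[of "length (bar xs)"] by simp
    show ?thesis
      using True IH sJ ch len_split[OF px] filter_count[OF px True]
      by (simp add: bar_snoc coinv_snoc)
  next
    case False
    then have "x = 1" using x0 by simp
    then show ?thesis using IH filter_count1[OF px] by (simp add: bar_snoc coinv_snoc J_snoc)
  qed
qed

theorem lemma3p3:
  fixes \<alpha> :: "nat list" and n :: nat
  assumes "strong_comp \<alpha> n"
  shows "deg \<alpha> = deg (bar \<alpha>) + int (length \<alpha> choose 2) - int (length (bar \<alpha>))
           + int (\<Sum>j \<in> {j. 1 \<le> j \<and> j \<le> length \<alpha> \<and> \<alpha> ! (j - 1) > 1}. j)"
proof -
  have p: "pos \<alpha>" using assms by (simp add: strong_comp_def pos_def)
  have lmu: "length (mu xs) = length xs" for xs by (simp add: mu_def)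
  have d: "deg xs = int (coinv xs) + T (mu xs)" for xs
    unfolding deg_def using T_eq[of "mu xs"] by (simp add: lmu)
  have le: "length (bar \<alpha>) \<le> length \<alpha>" using len_split[OF p] by simp
  have "T (mu \<alpha>) = T (mu (bar \<alpha>)) + int (length \<alpha> choose 2) + int (length (bar \<alpha>) choose 2)"
    using mu_split[OF p] T_split[of "mu (bar \<alpha>)" "length \<alpha> - length (bar \<alpha>)"] le by (simp add: lmu)
  then show ?thesis using coinv_main[OF p] d[of \<alpha>] d[of "bar \<alpha>"] by (simp add: J_def)
qed

end
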